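(* Let $X_1,\dots,X_n$ be real random variables with $\mathbb{E}|X_i|<\infty$, let $N,M$ be positive integers with $n\le M$, let $L\ge 0$, $\delta>0$, $K>0$, and set $A=1+LM/N$. Assume that for all $1\le i<\ell\le n$, almost surely $|\mathbb{E}_i(X_\ell)-\mathbb{E}_{i-1}(X_\ell\mid X_i=0)|\le L|X_i|/N$, and that for all $1\le i\le n$, $\mathbb{E}(e^{\delta A|X_i|}\mid\mathcal F_{i-1})\le K$ almost surely. Define the Doob martingale differences \[ d_i=\mathbb{E}_i(X_i+\cdots+X_n)-\mathbb{E}_{i-1}(X_i+\cdots+X_n),\qquad i=1,\dots,n. \] Then for every $i$, $\mathbb{E}_{i-1}(d_i)=0$, $S_n-\mathbb{E}S_n=\sum_{i=1}^n d_i$, and almost surely $\mathbb{E}_{i-1}\big(e^{\delta|d_i|}\big)\le K^2$.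
   Context: $\mathcal F_i=\sigma(X_1,\dots,X_i)$ with $\mathcal F_0$ trivial, $\mathbb{E}_i(\cdot)=\mathbb{E}(\cdot\mid\mathcal F_i)$, and $S_n=X_1+\cdots+X_n$. For $i<\ell$, writing $\mathbb{E}_i(X_\ell)=h_{i,\ell}(X_1,\dots,X_i)$ with $h_{i,\ell}$ measurable, $\mathbb{E}_{i-1}(X_\ell\mid X_i=0):=h_{i,\ell}(X_1,\dots,X_{i-1},0)$. *)

theory Defs
  imports "HOL-Probability.Probability"
begin

text \<open>Natural filtration F_i = sigma(X_1,...,X_i); F_0 is trivial (index set empty).\<close>
definition nat_filtr :: "'a measure \<Rightarrow> (nat \<Rightarrow> 'a \<Rightarrow> real) \<Rightarrow> nat \<Rightarrow> 'a measure" where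
  "nat_filtr P X i =
     vimage_algebra (space P) (\<lambda>\<omega>. \<lambda>j\<in>{1..i}. X j \<omega>) (PiM {1..i} (\<lambda>_. (borel :: real measure)))"

definition doob_diff :: "'a measure \<Rightarrow> (nat \<Rightarrow> 'a \<Rightarrow> real) \<Rightarrow> nat \<Rightarrow> nat \<Rightarrow> 'a \<Rightarrow> real" where
  "doob_diff P X n i = (\<lambda>\<omega>.
      real_cond_exp P (nat_filtr P X i) (\<lambda>w. \<Sum>l\<in>{i..n}. X l w) \<omega>
    - real_cond_exp P (nat_filtr P X (i - 1)) (\<lambda>w. \<Sum>l\<in>{i..n}. X l w) \<omega>)"

end

theory Submission
  imports Defs
begin

lemma (in sigma_finite_subalgebra) rce_abs_le:
  assumes "integrable M f"
  shows "AE x in M. \<bar>real_cond_exp M F f x\<bar> \<le> real_cond_exp M F (\<lambda>x. \<bar>f x\<bar>) x"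
proof -
  have i1: "integrable M (\<lambda>x. \<bar>f x\<bar>)" using assms by auto
  have "AE x in M. real_cond_exp M F f x \<le> real_cond_exp M F (\<lambda>x. \<bar>f x\<bar>) x"
    by (rule real_cond_exp_mono) (auto simp: assms i1)
  moreover have "AE x in M. real_cond_exp M F (\<lambda>x. - f x) x \<le> real_cond_exp M F (\<lambda>x. \<bar>f x\<bar>) x"
    by (rule real_cond_exp_mono) (auto simp: assms i1)
  moreover have "AE x in M. real_cond_exp M F (\<lambda>x. (-1) * f x) x = (-1) * real_cond_exp M F f x"
    by (rule real_cond_exp_cmult) (simp add: assms)
  ultimately show ?thesis by eventually_elim auto
qed

lemma (in sigma_finite_subalgebra) rce_nn:
  assumes [measurable]: "f \<in> borel_measurable M" and nn: "\<And>x. f x \<ge> 0"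
  shows "AE x in M. real_cond_exp M F f x = enn2real (nn_cond_exp M F (\<lambda>x. ennreal (f x)) x)"
proof -
  have "(\<lambda>x. ennreal(-f x)) = (\<lambda>x. 0)" using nn by (simp add: ennreal_neg)
  moreover have "AE x in M. 0 = nn_cond_exp M F (\<lambda>x. 0) x"
    by (rule nn_cond_exp_F_meas, auto)
  ultimately have "AE x in M. nn_cond_exp M F (\<lambda>x. ennreal(-f x)) x = 0"
    by simp
  then show ?thesis unfolding real_cond_exp_def by auto
qed

lemma telescope_sum: "(\<Sum>i\<in>{1..(n::nat)}. (g i - g (i-1)::real)) = g n - g 0"
  by (induction n) auto

locale doobsetup = prob_space P for P :: "'a measure" +
  fixes X :: "nat \<Rightarrow> 'a \<Rightarrow> real" and n :: nat
  assumes rv: "\<And>i. i \<in> {1..n} \<Longrightarrow> X i \<in> borel_measurable P"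
  and intX: "\<And>i. i \<in> {1..n} \<Longrightarrow> integrable P (X i)"
begin

lemma proj_space: "(\<lambda>\<omega>. \<lambda>j\<in>{1..i}. X j \<omega>) \<in> space P \<rightarrow> space (PiM {1..i} (\<lambda>_. (borel :: real measure)))"
  by (auto simp: space_PiM)

lemma proj_meas: "i \<le> n \<Longrightarrow> (\<lambda>\<omega>. \<lambda>j\<in>{1..i}. X j \<omega>) \<in> measurable P (PiM {1..i} (\<lambda>_. (borel :: real measure)))"
  by (rule measurable_restrict) (auto intro: rv)

lemma space_F[simp]: "space (nat_filtr P X i) = space P"
  by (simp add: nat_filtr_def)

lemma subalg: "i \<le> n \<Longrightarrow> subalgebra P (nat_filtr P X i)"
proof -
  assume "i \<le> n"
  have "sets (nat_filtr P X i) \<subseteq> sets P" unfolding nat_filtr_def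
    using proj_meas[OF \<open>i \<le> n\<close>] by (intro sets_image_in_sets) simp_all
  then show ?thesis unfolding subalgebra_def by simp
qed

lemma sfs: "i \<le> n \<Longrightarrow> sigma_finite_subalgebra P (nat_filtr P X i)"
  by (rule finite_measure_subalgebra_is_sigma_finite)
     (simp add: finite_measure_subalgebra_def finite_measure_subalgebra_axioms_def finite_measure_axioms subalg)

lemma X_F: assumes "1 \<le> j" "j \<le> i" shows "X j \<in> borel_measurable (nat_filtr P X i)"
proof -
  have "(\<lambda>\<omega>. \<lambda>j\<in>{1..i}. X j \<omega>) \<in> measurable (nat_filtr P X i) (PiM {1..i} (\<lambda>_. (borel :: real measure)))"
    unfolding nat_filtr_def by (rule measurable_vimage_algebra1[OF proj_space])
  then have "(\<lambda>\<omega>. (\<lambda>j\<in>{1..i}. X j \<omega>) j) \<in> borel_measurable (nat_filtr P X i)"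
  proof -
    have "(\<lambda>x. x j) \<in> measurable (PiM {1..i} (\<lambda>_. (borel :: real measure))) borel"
      by (rule measurable_component_singleton) (use assms in auto)
    from measurable_compose[OF \<open>_ \<in> measurable (nat_filtr P X i) _\<close> this] show ?thesis by simp
  qed
  moreover have "j \<in> {1..i}" using assms by simp
  ultimately show ?thesis by simp
qed

lemma nested: assumes "i \<le> k" "k \<le> n" shows "subalgebra (nat_filtr P X k) (nat_filtr P X i)"
proof -
  have "(\<lambda>\<omega>. \<lambda>j\<in>{1..i}. X j \<omega>) \<in> measurable (nat_filtr P X k) (PiM {1..i} (\<lambda>_. (borel :: real measure)))"
  proof (rule measurable_restrict)
    fix j assume "j \<in> {1..i}"
    then show "X j \<in> borel_measurable (nat_filtr P X k)" using assms by (intro X_F) auto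
  qed
  then have "sets (nat_filtr P X i) \<subseteq> sets (nat_filtr P X k)"
    unfolding nat_filtr_def[of P X i] by (intro sets_image_in_sets) auto
  then show ?thesis unfolding subalgebra_def by simp
qed

lemma F0_trivial:
  assumes "integrable P f"
  shows "AE x in P. real_cond_exp P (nat_filtr P X 0) f x = expectation f"
proof -
  interpret G: sigma_finite_subalgebra P "nat_filtr P X 0" using sfs by simp
  have sets0: "A = {} \<or> A = space P" if "A \<in> sets (nat_filtr P X 0)" for A
  proof -
    have "sets (nat_filtr P X 0) = {(\<lambda>\<omega>. \<lambda>j\<in>{1..0::nat}. X j \<omega>) -` B \<inter> space P | B. B \<in> sets (PiM {1..0::nat} (\<lambda>_. (borel :: real measure)))}"
      unfolding nat_filtr_def by (rule sets_vimage_algebra2[OF proj_space])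
    with that obtain B where B: "A = (\<lambda>\<omega>. \<lambda>j\<in>{1..0::nat}. X j \<omega>) -` B \<inter> space P"
       "B \<in> sets (PiM {1..0::nat} (\<lambda>_. (borel :: real measure)))" by auto
    have e0: "{1..0::nat} = {}" by simp
    have fe: "(\<lambda>\<omega>. \<lambda>j\<in>{1..0::nat}. X j \<omega>) = (\<lambda>\<omega>. (\<lambda>k. undefined))" by (simp add: restrict_def)
    from B(2) have "B = {} \<or> B = {\<lambda>k. undefined}" unfolding e0 sets_PiM_empty by simp
    then show ?thesis unfolding B(1) fe by auto
  qed
  show ?thesis
  proof (rule G.real_cond_exp_charact)
    fix A assume "A \<in> sets (nat_filtr P X 0)"
    then have "A = {} \<or> A = space P" by (rule sets0)
    then show "(\<integral>x\<in>A. f x \<partial>P) = (\<integral>x\<in>A. expectation f \<partial>P)"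
    proof
      assume "A = {}" then show ?thesis by (simp add: set_lebesgue_integral_def)
    next
      assume A: "A = space P"
      have "(\<integral>x\<in>A. f x \<partial>P) = expectation f" unfolding A by (rule set_integral_space[OF assms])
      moreover have "(\<integral>x\<in>A. expectation f \<partial>P) = expectation f" unfolding A
        by (subst set_integral_space) (simp_all add: prob_space)
      ultimately show ?thesis by simp
    qed
  next
    show "integrable P f" by (rule assms)
    show "integrable P (\<lambda>x. expectation f)" by simp
    show "(\<lambda>x. expectation f) \<in> borel_measurable (nat_filtr P X 0)" by simp
  qed
qed


lemma intS: "1 \<le> i \<Longrightarrow> integrable P (\<lambda>w. \<Sum>l\<in>{i..n}. X l w)"
  by (rule Bochner_Integration.integrable_sum) (auto intro: intX)

lemma part1:
  assumes "i \<in> {1..n}"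
  shows "AE \<omega> in P. real_cond_exp P (nat_filtr P X (i-1)) (doob_diff P X n i) \<omega> = 0"
proof -
  let ?G = "nat_filtr P X (i-1)" and ?H = "nat_filtr P X i"
  interpret G: sigma_finite_subalgebra P ?G by (rule sfs) (use assms in auto)
  interpret H: sigma_finite_subalgebra P ?H by (rule sfs) (use assms in auto)
  define S where "S = (\<lambda>w. \<Sum>l\<in>{i..n}. X l w)"
  have iS: "integrable P S" unfolding S_def using assms by (intro intS) auto
  have dd: "doob_diff P X n i = (\<lambda>\<omega>. real_cond_exp P ?H S \<omega> - real_cond_exp P ?G S \<omega>)"
    unfolding doob_diff_def S_def ..
  have 1: "AE \<omega> in P. real_cond_exp P ?G (doob_diff P X n i) \<omega> = real_cond_exp P ?G (real_cond_exp P ?H S) \<omega> - real_cond_exp P ?G (real_cond_exp P ?G S) \<omega>"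
    unfolding dd by (rule G.real_cond_exp_diff[OF H.real_cond_exp_int(1)[OF iS] G.real_cond_exp_int(1)[OF iS]])
  have 2: "AE \<omega> in P. real_cond_exp P ?G (real_cond_exp P ?H S) \<omega> = real_cond_exp P ?G S \<omega>"
    by (rule G.real_cond_exp_nested_subalg) (use assms in \<open>auto intro: subalg nested iS\<close>)
  have 3: "AE \<omega> in P. real_cond_exp P ?G (real_cond_exp P ?G S) \<omega> = real_cond_exp P ?G S \<omega>"
    by (rule G.real_cond_exp_F_meas[OF G.real_cond_exp_int(1)[OF iS]]) simp
  from 1 2 3 show ?thesis by eventually_elim simp
qed

lemma split_k:
  assumes "i \<in> {1..n}" "i - 1 \<le> k" "k \<le> n"
  shows "AE \<omega> in P. real_cond_exp P (nat_filtr P X k) (\<lambda>w. \<Sum>l\<in>{1..n}. X l w) \<omega>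
     = (\<Sum>l\<in>{1..<i}. X l \<omega>) + real_cond_exp P (nat_filtr P X k) (\<lambda>w. \<Sum>l\<in>{i..n}. X l w) \<omega>"
proof -
  interpret K: sigma_finite_subalgebra P "nat_filtr P X k" by (rule sfs) (use assms in auto)
  define U where "U = (\<lambda>w. \<Sum>l\<in>{1..<i}. X l w)"
  define S where "S = (\<lambda>w. \<Sum>l\<in>{i..n}. X l w)"
  have un: "{1..n} = {1..<i} \<union> {i..n}" using assms by auto
  have Sn: "(\<lambda>w. \<Sum>l\<in>{1..n}. X l w) = (\<lambda>w. U w + S w)"
    unfolding U_def S_def un by (rule ext, rule sum.union_disjoint) auto
  have iS: "integrable P S" unfolding S_def using assms by (intro intS) auto
  have iU: "integrable P U" unfolding U_def by (rule Bochner_Integration.integrable_sum) (use assms in \<open>auto intro: intX\<close>)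
  have mU: "U \<in> borel_measurable (nat_filtr P X k)" unfolding U_def
    by (intro borel_measurable_sum X_F) (use assms in auto)
  have 1: "AE \<omega> in P. real_cond_exp P (nat_filtr P X k) (\<lambda>w. U w + S w) \<omega>
     = real_cond_exp P (nat_filtr P X k) U \<omega> + real_cond_exp P (nat_filtr P X k) S \<omega>"
    by (rule K.real_cond_exp_add) (auto simp: iS iU)
  have 2: "AE \<omega> in P. real_cond_exp P (nat_filtr P X k) U \<omega> = U \<omega>"
    by (rule K.real_cond_exp_F_meas) (auto simp: iU mU)
  from 1 2 show ?thesis unfolding Sn by eventually_elim (simp add: U_def S_def)
qed

lemma dd_alt:
  assumes "i \<in> {1..n}"
  shows "AE \<omega> in P. doob_diff P X n i \<omega> = real_cond_exp P (nat_filtr P X i) (\<lambda>w. \<Sum>l\<in>{1..n}. X l w) \<omega>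
     - real_cond_exp P (nat_filtr P X (i-1)) (\<lambda>w. \<Sum>l\<in>{1..n}. X l w) \<omega>"
proof -
  have a: "AE \<omega> in P. real_cond_exp P (nat_filtr P X i) (\<lambda>w. \<Sum>l\<in>{1..n}. X l w) \<omega>
     = (\<Sum>l\<in>{1..<i}. X l \<omega>) + real_cond_exp P (nat_filtr P X i) (\<lambda>w. \<Sum>l\<in>{i..n}. X l w) \<omega>"
    by (rule split_k) (use assms in auto)
  have b: "AE \<omega> in P. real_cond_exp P (nat_filtr P X (i-1)) (\<lambda>w. \<Sum>l\<in>{1..n}. X l w) \<omega>
     = (\<Sum>l\<in>{1..<i}. X l \<omega>) + real_cond_exp P (nat_filtr P X (i-1)) (\<lambda>w. \<Sum>l\<in>{i..n}. X l w) \<omega>"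
    by (rule split_k) (use assms in auto)
  from a b show ?thesis by eventually_elim (simp add: doob_diff_def)
qed

lemma part2:
  "AE \<omega> in P. (\<Sum>i\<in>{1..n}. X i \<omega>) - (\<integral>w. (\<Sum>i\<in>{1..n}. X i w) \<partial>P)
                       = (\<Sum>i\<in>{1..n}. doob_diff P X n i \<omega>)"
proof -
  define Sn where "Sn = (\<lambda>w. \<Sum>l\<in>{1..n}. X l w)"
  define G where "G = (\<lambda>k \<omega>. real_cond_exp P (nat_filtr P X k) Sn \<omega>)"
  have iSn: "integrable P Sn" unfolding Sn_def using intS[of 1] by simp
  have a: "AE \<omega> in P. \<forall>i\<in>{1..n}. doob_diff P X n i \<omega> = G i \<omega> - G (i-1) \<omega>"
  proof (rule AE_finite_allI)
    show "finite {1..n}" by simp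
    fix i assume "i \<in> {1..n}"
    then show "AE \<omega> in P. doob_diff P X n i \<omega> = G i \<omega> - G (i-1) \<omega>"
      unfolding G_def Sn_def by (rule dd_alt)
  qed
  interpret N: sigma_finite_subalgebra P "nat_filtr P X n" by (rule sfs) simp
  have b: "AE \<omega> in P. G n \<omega> = Sn \<omega>" unfolding G_def
    by (rule N.real_cond_exp_F_meas[OF iSn]) (unfold Sn_def, intro borel_measurable_sum X_F, auto)
  have c: "AE \<omega> in P. G 0 \<omega> = expectation Sn" unfolding G_def by (rule F0_trivial[OF iSn])
  from a b c show ?thesis
  proof eventually_elim
    case (elim \<omega>)
    have "(\<Sum>i\<in>{1..n}. doob_diff P X n i \<omega>) = (\<Sum>i\<in>{1..n}. G i \<omega> - G (i-1) \<omega>)"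
      using elim(1) by (intro sum.cong) auto
    also have "\<dots> = G n \<omega> - G 0 \<omega>" by (rule telescope_sum)
    finally show ?case using elim(2,3) by (simp add: Sn_def)
  qed
qed

end



context doobsetup begin

lemma proj0_meas:
  assumes "1 \<le> i"
  shows "(\<lambda>\<omega>. \<lambda>j\<in>{1..i}. if j = i then 0 else X j \<omega>) \<in> measurable (nat_filtr P X (i-1)) (PiM {1..i} (\<lambda>_. (borel :: real measure)))"
proof (rule measurable_restrict)
  fix j assume j: "j \<in> {1..i}"
  show "(\<lambda>\<omega>. if j = i then 0 else X j \<omega>) \<in> borel_measurable (nat_filtr P X (i-1))"
  proof (cases "j = i")
    case True then show ?thesis by simp
  next
    case False
    then have "X j \<in> borel_measurable (nat_filtr P X (i-1))" using j by (intro X_F) auto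
    then show ?thesis using False by simp
  qed
qed

lemma bound_l:
  fixes L :: real and N :: nat
  assumes i: "1 \<le> i" "i < l" "l \<le> n"
    and h: "h \<in> borel_measurable (PiM {1..i} (\<lambda>_. (borel :: real measure)))"
    and h1: "AE \<omega> in P. real_cond_exp P (nat_filtr P X i) (X l) \<omega> = h (\<lambda>j\<in>{1..i}. X j \<omega>)"
    and h2: "AE \<omega> in P. \<bar>h (\<lambda>j\<in>{1..i}. X j \<omega>) - h (\<lambda>j\<in>{1..i}. if j = i then 0 else X j \<omega>)\<bar>
                         \<le> L * \<bar>X i \<omega>\<bar> / real N"
    and L: "L \<ge> 0"
  shows "AE \<omega> in P. \<bar>real_cond_exp P (nat_filtr P X i) (X l) \<omega> - real_cond_exp P (nat_filtr P X (i-1)) (X l) \<omega>\<bar>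
     \<le> L / real N * (\<bar>X i \<omega>\<bar> + real_cond_exp P (nat_filtr P X (i-1)) (\<lambda>w. \<bar>X i w\<bar>) \<omega>)"
proof -
  let ?G = "nat_filtr P X (i-1)" and ?H = "nat_filtr P X i"
  interpret G: sigma_finite_subalgebra P ?G by (rule sfs) (use i in auto)
  interpret H: sigma_finite_subalgebra P ?H by (rule sfs) (use i in auto)
  define c where "c = L / real N"
  have c0: "c \<ge> 0" unfolding c_def using L by simp
  define hP where "hP = (\<lambda>\<omega>. h (\<lambda>j\<in>{1..i}. X j \<omega>))"
  define hQ where "hQ = (\<lambda>\<omega>. h (\<lambda>j\<in>{1..i}. if j = i then 0 else X j \<omega>))"
  define D where "D = (\<lambda>\<omega>. hP \<omega> - hQ \<omega>)"
  have mhP: "hP \<in> borel_measurable P" unfolding hP_def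
    using measurable_compose[OF proj_meas h] i by simp
  have mhQG: "hQ \<in> borel_measurable ?G" unfolding hQ_def
    using measurable_compose[OF proj0_meas h] i by simp
  have mhQ: "hQ \<in> borel_measurable P" by (rule measurable_from_subalg[OF G.subalg mhQG])
  have mD: "D \<in> borel_measurable P" unfolding D_def using mhP mhQ by measurable
  have iXl: "integrable P (X l)" using i by (intro intX) auto
  have iXi: "integrable P (X i)" using i by (intro intX) auto
  have iY: "integrable P (\<lambda>w. c * \<bar>X i w\<bar>)" using iXi by auto
  have iY1: "integrable P (\<lambda>w. \<bar>X i w\<bar>)" using iXi by auto
  have iHX: "integrable P (real_cond_exp P ?H (X l))" by (rule H.real_cond_exp_int(1)[OF iXl])
  have ihP: "integrable P hP"
    using iHX h1 mhP by (subst integrable_cong_AE[where g = "real_cond_exp P ?H (X l)"]) (auto simp: hP_def)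
  have Dle: "AE \<omega> in P. \<bar>D \<omega>\<bar> \<le> c * \<bar>X i \<omega>\<bar>"
    using h2 by eventually_elim (simp add: D_def hP_def hQ_def c_def)
  have iD: "integrable P D"
    by (rule Bochner_Integration.integrable_bound[OF iY mD]) (use Dle c0 in \<open>auto simp: abs_mult\<close>)
  have iQ: "integrable P hQ"
  proof -
    have "hQ = (\<lambda>\<omega>. hP \<omega> - D \<omega>)" unfolding D_def by auto
    then show ?thesis using ihP iD by simp
  qed
  have e1: "AE \<omega> in P. real_cond_exp P ?G (real_cond_exp P ?H (X l)) \<omega> = real_cond_exp P ?G (X l) \<omega>"
    by (rule G.real_cond_exp_nested_subalg) (use i in \<open>auto intro: subalg nested iXl\<close>)
  have e2: "AE \<omega> in P. real_cond_exp P ?G (real_cond_exp P ?H (X l)) \<omega> = real_cond_exp P ?G hP \<omega>"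
    by (rule G.real_cond_exp_cong) (use h1 mhP in \<open>auto simp: hP_def\<close>)
  have hPe: "hP = (\<lambda>\<omega>. hQ \<omega> + D \<omega>)" unfolding D_def by auto
  have e3: "AE \<omega> in P. real_cond_exp P ?G hP \<omega> = real_cond_exp P ?G hQ \<omega> + real_cond_exp P ?G D \<omega>"
    unfolding hPe by (rule G.real_cond_exp_add[OF iQ iD])
  have e4: "AE \<omega> in P. real_cond_exp P ?G hQ \<omega> = hQ \<omega>"
    by (rule G.real_cond_exp_F_meas[OF iQ mhQG])
  have e5: "AE \<omega> in P. \<bar>real_cond_exp P ?G D \<omega>\<bar> \<le> real_cond_exp P ?G (\<lambda>x. \<bar>D x\<bar>) \<omega>"
    by (rule G.rce_abs_le[OF iD])
  have e6: "AE \<omega> in P. real_cond_exp P ?G (\<lambda>x. \<bar>D x\<bar>) \<omega> \<le> real_cond_exp P ?G (\<lambda>w. c * \<bar>X i w\<bar>) \<omega>"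
    by (rule G.real_cond_exp_mono[OF Dle]) (use iD iY in auto)
  have e7: "AE \<omega> in P. real_cond_exp P ?G (\<lambda>w. c * \<bar>X i w\<bar>) \<omega> = c * real_cond_exp P ?G (\<lambda>w. \<bar>X i w\<bar>) \<omega>"
    by (rule G.real_cond_exp_cmult[OF iY1])
  from e1 e2 e3 e4 e5 e6 e7 h1 Dle show ?thesis
  proof eventually_elim
    case (elim \<omega>)
    have "real_cond_exp P ?H (X l) \<omega> - real_cond_exp P ?G (X l) \<omega> = D \<omega> - real_cond_exp P ?G D \<omega>"
      using elim(1-4,8) by (simp add: D_def hP_def)
    then have "\<bar>real_cond_exp P ?H (X l) \<omega> - real_cond_exp P ?G (X l) \<omega>\<bar> \<le> \<bar>D \<omega>\<bar> + \<bar>real_cond_exp P ?G D \<omega>\<bar>"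
      by simp
    also have "\<dots> \<le> c * \<bar>X i \<omega>\<bar> + c * real_cond_exp P ?G (\<lambda>w. \<bar>X i w\<bar>) \<omega>"
      using elim(5-7,9) by linarith
    finally show ?case by (simp add: c_def distrib_left)
  qed
qed

lemma bound_i:
  assumes i: "i \<in> {1..n}"
  shows "AE \<omega> in P. \<bar>real_cond_exp P (nat_filtr P X i) (X i) \<omega> - real_cond_exp P (nat_filtr P X (i-1)) (X i) \<omega>\<bar>
     \<le> \<bar>X i \<omega>\<bar> + real_cond_exp P (nat_filtr P X (i-1)) (\<lambda>w. \<bar>X i w\<bar>) \<omega>"
proof -
  let ?G = "nat_filtr P X (i-1)" and ?H = "nat_filtr P X i"
  interpret G: sigma_finite_subalgebra P ?G by (rule sfs) (use i in auto)
  interpret H: sigma_finite_subalgebra P ?H by (rule sfs) (use i in auto)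
  have iXi: "integrable P (X i)" using i by (intro intX) auto
  have a: "AE \<omega> in P. real_cond_exp P ?H (X i) \<omega> = X i \<omega>"
    by (rule H.real_cond_exp_F_meas[OF iXi]) (rule X_F, use i in auto)
  have b: "AE \<omega> in P. \<bar>real_cond_exp P ?G (X i) \<omega>\<bar> \<le> real_cond_exp P ?G (\<lambda>x. \<bar>X i x\<bar>) \<omega>"
    by (rule G.rce_abs_le[OF iXi])
  from a b show ?thesis by eventually_elim linarith
qed

lemma dd_sum:
  assumes i: "i \<in> {1..n}"
  shows "AE \<omega> in P. doob_diff P X n i \<omega> = (\<Sum>l\<in>{i..n}. real_cond_exp P (nat_filtr P X i) (X l) \<omega> - real_cond_exp P (nat_filtr P X (i-1)) (X l) \<omega>)"
proof -
  let ?G = "nat_filtr P X (i-1)" and ?H = "nat_filtr P X i"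
  interpret G: sigma_finite_subalgebra P ?G by (rule sfs) (use i in auto)
  interpret H: sigma_finite_subalgebra P ?H by (rule sfs) (use i in auto)
  define Xt where "Xt = (\<lambda>l. if l \<in> {1..n} then X l else (\<lambda>_. 0::real))"
  have iXt: "integrable P (Xt l)" for l unfolding Xt_def by (auto intro: intX)
  have Se: "(\<lambda>w. \<Sum>l\<in>{i..n}. X l w) = (\<lambda>w. \<Sum>l\<in>{i..n}. Xt l w)"
    using i by (intro ext sum.cong) (auto simp: Xt_def)
  have Xte: "l \<in> {i..n} \<Longrightarrow> Xt l = X l" for l using i by (auto simp: Xt_def)
  have a: "AE \<omega> in P. real_cond_exp P ?H (\<lambda>w. \<Sum>l\<in>{i..n}. Xt l w) \<omega> = (\<Sum>l\<in>{i..n}. real_cond_exp P ?H (Xt l) \<omega>)"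
    by (rule H.real_cond_exp_sum[OF iXt])
  have b: "AE \<omega> in P. real_cond_exp P ?G (\<lambda>w. \<Sum>l\<in>{i..n}. Xt l w) \<omega> = (\<Sum>l\<in>{i..n}. real_cond_exp P ?G (Xt l) \<omega>)"
    by (rule G.real_cond_exp_sum[OF iXt])
  from a b show ?thesis
  proof eventually_elim
    case (elim \<omega>)
    have "doob_diff P X n i \<omega> = (\<Sum>l\<in>{i..n}. real_cond_exp P ?H (Xt l) \<omega>) - (\<Sum>l\<in>{i..n}. real_cond_exp P ?G (Xt l) \<omega>)"
      unfolding doob_diff_def Se using elim by simp
    also have "\<dots> = (\<Sum>l\<in>{i..n}. real_cond_exp P ?H (Xt l) \<omega> - real_cond_exp P ?G (Xt l) \<omega>)"
      by (simp add: sum_subtractf)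
    also have "\<dots> = (\<Sum>l\<in>{i..n}. real_cond_exp P ?H (X l) \<omega> - real_cond_exp P ?G (X l) \<omega>)"
      by (rule sum.cong) (simp_all add: Xte)
    finally show ?case .
  qed
qed

end



context doobsetup begin

lemma bound_d:
  fixes L :: real and N M :: nat
  assumes i: "i \<in> {1..n}" and NM: "N > 0" "n \<le> M" and L: "L \<ge> 0"
    and lip: "\<And>l. i < l \<Longrightarrow> l \<le> n \<Longrightarrow>
       (\<exists>h \<in> borel_measurable (PiM {1..i} (\<lambda>_. (borel :: real measure))).
          (AE \<omega> in P. real_cond_exp P (nat_filtr P X i) (X l) \<omega> = h (\<lambda>j\<in>{1..i}. X j \<omega>)) \<and>
          (AE \<omega> in P. \<bar>h (\<lambda>j\<in>{1..i}. X j \<omega>) - h (\<lambda>j\<in>{1..i}. if j = i then 0 else X j \<omega>)\<bar>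
                         \<le> L * \<bar>X i \<omega>\<bar> / real N))"
  shows "AE \<omega> in P. \<bar>doob_diff P X n i \<omega>\<bar> \<le> (1 + L * real M / real N) *
      (\<bar>X i \<omega>\<bar> + real_cond_exp P (nat_filtr P X (i-1)) (\<lambda>w. \<bar>X i w\<bar>) \<omega>)"
proof -
  let ?G = "nat_filtr P X (i-1)" and ?H = "nat_filtr P X i"
  interpret G: sigma_finite_subalgebra P ?G by (rule sfs) (use i in auto)
  define c where "c = L / real N"
  have c0: "c \<ge> 0" unfolding c_def using L by simp
  define EY where "EY = real_cond_exp P ?G (\<lambda>w. \<bar>X i w\<bar>)"
  define t where "t = (\<lambda>l \<omega>. real_cond_exp P ?H (X l) \<omega> - real_cond_exp P ?G (X l) \<omega>)"
  have a: "AE \<omega> in P. \<forall>l\<in>{i<..n}. \<bar>t l \<omega>\<bar> \<le> c * (\<bar>X i \<omega>\<bar> + EY \<omega>)"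
  proof (rule AE_finite_allI)
    show "finite {i<..n}" by simp
    fix l assume l: "l \<in> {i<..n}"
    then obtain h where h: "h \<in> borel_measurable (PiM {1..i} (\<lambda>_. (borel :: real measure)))"
      "AE \<omega> in P. real_cond_exp P (nat_filtr P X i) (X l) \<omega> = h (\<lambda>j\<in>{1..i}. X j \<omega>)"
      "AE \<omega> in P. \<bar>h (\<lambda>j\<in>{1..i}. X j \<omega>) - h (\<lambda>j\<in>{1..i}. if j = i then 0 else X j \<omega>)\<bar>
                         \<le> L * \<bar>X i \<omega>\<bar> / real N" using lip[of l] by auto
    show "AE \<omega> in P. \<bar>t l \<omega>\<bar> \<le> c * (\<bar>X i \<omega>\<bar> + EY \<omega>)"
      unfolding t_def c_def EY_def by (rule bound_l[OF _ _ _ h L]) (use i l in auto)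
  qed
  have b: "AE \<omega> in P. \<bar>t i \<omega>\<bar> \<le> \<bar>X i \<omega>\<bar> + EY \<omega>"
    unfolding t_def EY_def by (rule bound_i[OF i])
  have d: "AE \<omega> in P. doob_diff P X n i \<omega> = (\<Sum>l\<in>{i..n}. t l \<omega>)"
    unfolding t_def by (rule dd_sum[OF i])
  have iY1: "integrable P (\<lambda>w. \<bar>X i w\<bar>)" using i intX by auto
  have e: "AE \<omega> in P. EY \<omega> \<ge> 0" unfolding EY_def
    by (rule G.real_cond_exp_pos) (use iY1 in auto)
  have ins: "{i..n} = insert i {i<..n}" using i by auto
  have cM: "real (n - i) * c \<le> real M * c" using NM c0 by (intro mult_right_mono) auto
  have Mc: "L * real M / real N = real M * c" unfolding c_def by simp
  from a b d e show ?thesis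
  proof eventually_elim
    case (elim \<omega>)
    define B where "B = \<bar>X i \<omega>\<bar> + EY \<omega>"
    have B0: "B \<ge> 0" unfolding B_def using elim(4) by simp
    have "\<bar>doob_diff P X n i \<omega>\<bar> = \<bar>t i \<omega> + (\<Sum>l\<in>{i<..n}. t l \<omega>)\<bar>"
      using elim(3) unfolding ins by simp
    also have "\<dots> \<le> \<bar>t i \<omega>\<bar> + (\<Sum>l\<in>{i<..n}. \<bar>t l \<omega>\<bar>)"
      using abs_triangle_ineq[of "t i \<omega>" "\<Sum>l\<in>{i<..n}. t l \<omega>"] sum_abs[of "\<lambda>l. t l \<omega>" "{i<..n}"] by linarith
    also have "(\<Sum>l\<in>{i<..n}. \<bar>t l \<omega>\<bar>) \<le> real (card {i<..n}) * (c * B)"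
      by (rule sum_bounded_above) (use elim(1) in \<open>auto simp: B_def\<close>)
    also have "real (card {i<..n}) * (c * B) = (real (n - i) * c) * B" by simp
    also have "\<dots> \<le> (real M * c) * B" by (rule mult_right_mono[OF cM B0])
    finally have "\<bar>doob_diff P X n i \<omega>\<bar> \<le> B + (real M * c) * B" using elim(2) unfolding B_def by linarith
    moreover have "(1 + L * real M / real N) * (\<bar>X i \<omega>\<bar> + real_cond_exp P ?G (\<lambda>w. \<bar>X i w\<bar>) \<omega>) = B + (real M * c) * B"
      unfolding Mc B_def EY_def by (simp add: algebra_simps)
    ultimately show ?case by linarith
  qed
qed

lemma exp_part:
  fixes \<delta> K A :: real
  assumes i: "i \<in> {1..n}" and pos: "\<delta> > 0" "K > 0" "A > 0"
    and bd: "AE \<omega> in P. \<bar>doob_diff P X n i \<omega>\<bar> \<le> A *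
      (\<bar>X i \<omega>\<bar> + real_cond_exp P (nat_filtr P X (i-1)) (\<lambda>w. \<bar>X i w\<bar>) \<omega>)"
    and em: "AE \<omega> in P. nn_cond_exp P (nat_filtr P X (i - 1)) (\<lambda>w. ennreal (exp (\<delta> * A * \<bar>X i w\<bar>))) \<omega>
                   \<le> ennreal K"
  shows "AE \<omega> in P. nn_cond_exp P (nat_filtr P X (i - 1)) (\<lambda>w. ennreal (exp (\<delta> * \<bar>doob_diff P X n i w\<bar>))) \<omega>
               \<le> ennreal (K ^ 2)"
proof -
  let ?G = "nat_filtr P X (i-1)"
  interpret G: sigma_finite_subalgebra P ?G by (rule sfs) (use i in auto)
  define c where "c = \<delta> * A"
  have c0: "c > 0" unfolding c_def using pos by simp
  define EY where "EY = real_cond_exp P ?G (\<lambda>w. \<bar>X i w\<bar>)"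
  define E where "E = (\<lambda>w. ennreal (exp (c * \<bar>X i w\<bar>)))"
  have mX: "X i \<in> borel_measurable P" using i rv by auto
  have mE: "E \<in> borel_measurable P" unfolding E_def using mX by measurable
  have iY1: "integrable P (\<lambda>w. \<bar>X i w\<bar>)" using i intX by auto
  have em': "AE \<omega> in P. nn_cond_exp P ?G E \<omega> \<le> ennreal K" using em unfolding E_def c_def by simp
  have iexp: "integrable P (\<lambda>w. exp (c * \<bar>X i w\<bar>))"
  proof (rule integrableI_nonneg)
    show "(\<lambda>w. exp (c * \<bar>X i w\<bar>)) \<in> borel_measurable P" using mX by measurable
    show "AE x in P. 0 \<le> exp (c * \<bar>X i x\<bar>)" by simp
    have "(\<integral>\<^sup>+ x. ennreal (exp (c * \<bar>X i x\<bar>)) \<partial>P) = (\<integral>\<^sup>+ x. 1 * E x \<partial>P)" unfolding E_def by simp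
    also have "\<dots> = (\<integral>\<^sup>+ x. 1 * nn_cond_exp P ?G E x \<partial>P)"
      by (rule G.nn_cond_exp_intg[symmetric]) (simp_all add: mE)
    also have "\<dots> \<le> (\<integral>\<^sup>+ x. ennreal K \<partial>P)"
      by (rule nn_integral_mono_AE) (use em' in simp)
    also have "\<dots> = ennreal K" by (simp add: emeasure_space_1)
    also have "\<dots> < \<infinity>" by simp
    finally show "(\<integral>\<^sup>+ x. ennreal (exp (c * \<bar>X i x\<bar>)) \<partial>P) < \<infinity>" .
  qed
  have jen: "AE \<omega> in P. exp (c * EY \<omega>) \<le> real_cond_exp P ?G (\<lambda>w. exp (c * \<bar>X i w\<bar>)) \<omega>"
    unfolding EY_def
    by (rule G.real_cond_exp_jensens_inequality(2)[where I = UNIV and q = "\<lambda>x. exp (c * x)", OF iY1])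
       (use iexp convex_on_exp[of c] c0 in auto)
  have rn: "AE \<omega> in P. real_cond_exp P ?G (\<lambda>w. exp (c * \<bar>X i w\<bar>)) \<omega> = enn2real (nn_cond_exp P ?G E \<omega>)"
    unfolding E_def by (rule G.rce_nn) (use mX in auto)
  have md: "doob_diff P X n i \<in> borel_measurable P" unfolding doob_diff_def by measurable
  have mEY: "EY \<in> borel_measurable ?G" unfolding EY_def by simp
  have m1: "AE \<omega> in P. nn_cond_exp P ?G (\<lambda>w. ennreal (exp (\<delta> * \<bar>doob_diff P X n i w\<bar>))) \<omega>
      \<le> nn_cond_exp P ?G (\<lambda>w. ennreal (exp (c * EY w)) * E w) \<omega>"
  proof (rule G.nn_cond_exp_mono)
    show "AE x in P. ennreal (exp (\<delta> * \<bar>doob_diff P X n i x\<bar>)) \<le> ennreal (exp (c * EY x)) * E x"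
      using bd
    proof eventually_elim
      case (elim x)
      have "\<delta> * \<bar>doob_diff P X n i x\<bar> \<le> \<delta> * (A * (\<bar>X i x\<bar> + EY x))"
        using elim pos by (intro mult_left_mono) (auto simp: EY_def)
      also have "\<dots> = c * EY x + c * \<bar>X i x\<bar>" by (simp add: c_def algebra_simps)
      finally have "exp (\<delta> * \<bar>doob_diff P X n i x\<bar>) \<le> exp (c * EY x) * exp (c * \<bar>X i x\<bar>)"
        by (simp add: exp_add[symmetric])
      then show ?case unfolding E_def by (simp add: ennreal_mult[symmetric] ennreal_leI)
    qed
    show "(\<lambda>x. ennreal (exp (\<delta> * \<bar>doob_diff P X n i x\<bar>))) \<in> borel_measurable P" using md by measurable
    have "EY \<in> borel_measurable P" unfolding EY_def by simp
    then show "(\<lambda>x. ennreal (exp (c * EY x)) * E x) \<in> borel_measurable P" using mE by measurable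
  qed
  have m2: "AE \<omega> in P. ennreal (exp (c * EY \<omega>)) * nn_cond_exp P ?G E \<omega> = nn_cond_exp P ?G (\<lambda>w. ennreal (exp (c * EY w)) * E w) \<omega>"
    by (rule G.nn_cond_exp_prod) (use mEY mE in measurable)
  from m1 m2 jen rn em' show ?thesis
  proof eventually_elim
    case (elim \<omega>)
    have k1: "enn2real (nn_cond_exp P ?G E \<omega>) \<le> K"
      using enn2real_mono[OF elim(5)] pos by simp
    have k2: "ennreal (exp (c * EY \<omega>)) \<le> ennreal K"
      using elim(3,4) k1 by (intro ennreal_leI) simp
    have "nn_cond_exp P ?G (\<lambda>w. ennreal (exp (\<delta> * \<bar>doob_diff P X n i w\<bar>))) \<omega>
        \<le> ennreal (exp (c * EY \<omega>)) * nn_cond_exp P ?G E \<omega>" using elim(1,2) by simp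
    also have "\<dots> \<le> ennreal K * ennreal K" by (rule mult_mono[OF k2 elim(5)]) simp_all
    also have "\<dots> = ennreal (K ^ 2)" using pos by (simp add: power2_eq_square ennreal_mult)
    finally show ?case .
  qed
qed

end

theorem mainTheorem3:
  fixes P :: "'a measure" and X :: "nat \<Rightarrow> 'a \<Rightarrow> real"
    and n N M :: nat and L \<delta> K A :: real
  assumes "prob_space P"
    and rv: "\<And>i. i \<in> {1..n} \<Longrightarrow> X i \<in> borel_measurable P"
    and int: "\<And>i. i \<in> {1..n} \<Longrightarrow> integrable P (X i)"
    and "N > 0" and "M > 0" and "n \<le> M"
    and "L \<ge> 0" and "\<delta> > 0" and "K > 0"
    and A_def: "A = 1 + L * real M / real N"
    and lip: "\<And>i l. 1 \<le> i \<Longrightarrow> i < l \<Longrightarrow> l \<le> n \<Longrightarrow>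
       (\<exists>h \<in> borel_measurable (PiM {1..i} (\<lambda>_. (borel :: real measure))).
          (AE \<omega> in P. real_cond_exp P (nat_filtr P X i) (X l) \<omega> = h (\<lambda>j\<in>{1..i}. X j \<omega>)) \<and>
          (AE \<omega> in P. \<bar>h (\<lambda>j\<in>{1..i}. X j \<omega>) - h (\<lambda>j\<in>{1..i}. if j = i then 0 else X j \<omega>)\<bar>
                         \<le> L * \<bar>X i \<omega>\<bar> / real N))"
    and expmom: "\<And>i. i \<in> {1..n} \<Longrightarrow>
       AE \<omega> in P. nn_cond_exp P (nat_filtr P X (i - 1)) (\<lambda>w. ennreal (exp (\<delta> * A * \<bar>X i w\<bar>))) \<omega>
                   \<le> ennreal K"
  shows "(\<forall>i\<in>{1..n}. AE \<omega> in P. real_cond_exp P (nat_filtr P X (i - 1)) (doob_diff P X n i) \<omega> = 0)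
       \<and> (AE \<omega> in P. (\<Sum>i\<in>{1..n}. X i \<omega>) - (\<integral>w. (\<Sum>i\<in>{1..n}. X i w) \<partial>P)
                       = (\<Sum>i\<in>{1..n}. doob_diff P X n i \<omega>))
       \<and> (\<forall>i\<in>{1..n}. AE \<omega> in P.
             nn_cond_exp P (nat_filtr P X (i - 1)) (\<lambda>w. ennreal (exp (\<delta> * \<bar>doob_diff P X n i w\<bar>))) \<omega>
               \<le> ennreal (K ^ 2))"
proof -
  interpret doobsetup P X n
    by (intro doobsetup.intro doobsetup_axioms.intro) (use assms in auto)
  have LMN: "L * real M / real N \<ge> 0" using \<open>L \<ge> 0\<close> by simp
  have A0: "A > 0" unfolding A_def using LMN by linarith
  show ?thesis
  proof (intro conjI ballI)
    fix i assume "i \<in> {1..n}"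
    then show "AE \<omega> in P. real_cond_exp P (nat_filtr P X (i - 1)) (doob_diff P X n i) \<omega> = 0"
      by (rule part1)
  next
    show "AE \<omega> in P. (\<Sum>i\<in>{1..n}. X i \<omega>) - (\<integral>w. (\<Sum>i\<in>{1..n}. X i w) \<partial>P)
                       = (\<Sum>i\<in>{1..n}. doob_diff P X n i \<omega>)" by (rule part2)
  next
    fix i assume i: "i \<in> {1..n}"
    have bd: "AE \<omega> in P. \<bar>doob_diff P X n i \<omega>\<bar> \<le> (1 + L * real M / real N) *
      (\<bar>X i \<omega>\<bar> + real_cond_exp P (nat_filtr P X (i-1)) (\<lambda>w. \<bar>X i w\<bar>) \<omega>)"
    proof (rule bound_d[OF i \<open>N > 0\<close> \<open>n \<le> M\<close> \<open>L \<ge> 0\<close>])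
      fix l assume "i < l" "l \<le> n"
      then show "\<exists>h \<in> borel_measurable (PiM {1..i} (\<lambda>_. (borel :: real measure))).
          (AE \<omega> in P. real_cond_exp P (nat_filtr P X i) (X l) \<omega> = h (\<lambda>j\<in>{1..i}. X j \<omega>)) \<and>
          (AE \<omega> in P. \<bar>h (\<lambda>j\<in>{1..i}. X j \<omega>) - h (\<lambda>j\<in>{1..i}. if j = i then 0 else X j \<omega>)\<bar>
                         \<le> L * \<bar>X i \<omega>\<bar> / real N)"
        using lip[of i l] i by auto
    qed
    show "AE \<omega> in P. nn_cond_exp P (nat_filtr P X (i - 1)) (\<lambda>w. ennreal (exp (\<delta> * \<bar>doob_diff P X n i w\<bar>))) \<omega>
               \<le> ennreal (K ^ 2)"
      by (rule exp_part[OF i \<open>\<delta> > 0\<close> \<open>K > 0\<close> A0 bd[folded A_def] expmom[OF i]])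
  qed
qed

end
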